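(* Let $Ab_0$ denote the class of all finite abelian groups, and define $f:Ab_0\to(0,\infty)$ by $f(G)=\frac{|\mathrm{Aut}(G)|}{|G|}$, where $\mathrm{Aut}(G)$ is the automorphism group of $G$. Then the set $\mathrm{Im}(f)=\{f(G)\mid G\in Ab_0\}$ is dense in $[0,\infty)$. *)

theory Defs
  imports "HOL-Analysis.Analysis" "HOL-Algebra.Bij"
begin

definition aut_ratio :: "('a, 'b) monoid_scheme \<Rightarrow> real" where
  "aut_ratio G = real (card (auto G)) / real (card (carrier G))"

end

theory Submission
  imports Defs "HOL-Algebra.Multiplicative_Group" "HOL-Number_Theory.Number_Theory"
begin

lemma card_auto_iso:
  assumes G: "group G" and H: "group H" and h: "h \<in> iso G H"
  shows "card (auto G) = card (auto H)"
proof -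
  interpret G: group G by (rule G)
  interpret H: group H by (rule H)
  define h' where "h' = inv_into (carrier G) h"
  have h'iso: "h' \<in> iso H G" unfolding h'_def by (rule G.iso_set_sym[OF h])
  have hb: "bij_betw h (carrier G) (carrier H)" using h by (simp add: iso_def)
  have h'b: "bij_betw h' (carrier H) (carrier G)" using h'iso by (simp add: iso_def)
  have hh: "h \<in> hom G H" "h \<in> hom G H" using h by (auto simp: iso_def)
  have hh': "h' \<in> hom H G" using h'iso by (simp add: iso_def)
  have l1: "h' (h x) = x" if "x \<in> carrier G" for x
    using hb that unfolding h'_def by (simp add: bij_betw_def inv_into_f_f)
  have l2: "h (h' y) = y" if "y \<in> carrier H" for y
    using hb that unfolding h'_def by (simp add: bij_betw_def f_inv_into_f)
  define F where "F = (\<lambda>a. restrict (\<lambda>y. h (a (h' y))) (carrier H))"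
  define F' where "F' = (\<lambda>b. restrict (\<lambda>x. h' (b (h x))) (carrier G))"
  have F_in: "F a \<in> auto H" if "a \<in> auto G" for a
  proof -
    have ah: "a \<in> hom G G" and ab: "bij_betw a (carrier G) (carrier G)"
      using that by (auto simp: auto_def Bij_def)
    have "h \<circ> a \<circ> h' \<in> hom H H"
      by (rule hom_compose[OF hh' hom_compose[OF ah hh(2)]])
    then have "F a \<in> hom H H"
      by (rule H.hom_restrict) (simp add: F_def)
    moreover have "bij_betw (h \<circ> a \<circ> h') (carrier H) (carrier H)"
      using bij_betw_trans[OF bij_betw_trans[OF h'b ab] hb] by (simp add: comp_assoc)
    then have "bij_betw (F a) (carrier H) (carrier H)"
      by (rule bij_betw_cong[THEN iffD1, rotated]) (simp add: F_def)
    ultimately show ?thesis by (simp add: auto_def Bij_def F_def)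
  qed
  have F'_in: "F' b \<in> auto G" if "b \<in> auto H" for b
  proof -
    have bh: "b \<in> hom H H" and bb: "bij_betw b (carrier H) (carrier H)"
      using that by (auto simp: auto_def Bij_def)
    have "h' \<circ> b \<circ> h \<in> hom G G"
      by (rule hom_compose[OF hh(2) hom_compose[OF bh hh']])
    then have "F' b \<in> hom G G"
      by (rule G.hom_restrict) (simp add: F'_def)
    moreover have "bij_betw (h' \<circ> b \<circ> h) (carrier G) (carrier G)"
      using bij_betw_trans[OF bij_betw_trans[OF hb bb] h'b] by (simp add: comp_assoc)
    then have "bij_betw (F' b) (carrier G) (carrier G)"
      by (rule bij_betw_cong[THEN iffD1, rotated]) (simp add: F'_def)
    ultimately show ?thesis by (simp add: auto_def Bij_def F'_def)
  qed
  have "bij_betw F (auto G) (auto H)"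
  proof (rule bij_betw_byWitness[where f'=F'])
    show "\<forall>a\<in>auto G. F' (F a) = a"
    proof
      fix a assume a: "a \<in> auto G"
      then have ae: "a \<in> extensional (carrier G)" and af: "a \<in> carrier G \<rightarrow> carrier G"
        by (auto simp: auto_def Bij_def hom_def)
      show "F' (F a) = a"
      proof
        fix x show "F' (F a) x = a x"
          using ae af hb l1 unfolding F'_def F_def
          by (cases "x \<in> carrier G") (auto simp: extensional_def bij_betw_def)
      qed
    qed
    show "\<forall>b\<in>auto H. F (F' b) = b"
    proof
      fix b assume b: "b \<in> auto H"
      then have be: "b \<in> extensional (carrier H)" and bf: "b \<in> carrier H \<rightarrow> carrier H"
        by (auto simp: auto_def Bij_def hom_def)
      show "F (F' b) = b"
      proof
        fix y show "F (F' b) y = b y"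
          using be bf h'b l2 unfolding F'_def F_def
          by (cases "y \<in> carrier H") (auto simp: extensional_def bij_betw_def)
      qed
    qed
  qed (use F_in F'_in in auto)
  then show ?thesis by (rule bij_betw_same_card)
qed

lemma transfer_nat:
  fixes G :: "'a monoid"
  assumes G: "comm_group G" and fin: "finite (carrier G)"
  shows "\<exists>G'::nat monoid. comm_group G' \<and> finite (carrier G') \<and> aut_ratio G' = aut_ratio G"
proof -
  interpret G: comm_group G by (rule G)
  obtain e :: "'a \<Rightarrow> nat" and n where e: "e ` carrier G = {i. i < n}" "inj_on e (carrier G)"
    using finite_imp_inj_to_nat_seg[OF fin] by blast
  define ei where "ei = inv_into (carrier G) e"
  have ei: "ei (e a) = a" if "a \<in> carrier G" for a
    using e(2) that by (simp add: ei_def inv_into_f_f)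
  define G' where "G' = \<lparr>carrier = e ` carrier G, mult = (\<lambda>x y. e (ei x \<otimes>\<^bsub>G\<^esub> ei y)), one = e \<one>\<^bsub>G\<^esub>\<rparr>"
  have cG': "carrier G' = e ` carrier G" and mG': "\<And>a b. a \<in> carrier G \<Longrightarrow> b \<in> carrier G \<Longrightarrow> e a \<otimes>\<^bsub>G'\<^esub> e b = e (a \<otimes>\<^bsub>G\<^esub> b)"
    and oG': "\<one>\<^bsub>G'\<^esub> = e \<one>\<^bsub>G\<^esub>"
    by (auto simp: G'_def ei)
  have cg: "comm_group G'"
  proof (rule comm_groupI)
    show "x \<otimes>\<^bsub>G'\<^esub> y \<in> carrier G'" if "x \<in> carrier G'" "y \<in> carrier G'" for x y
      using that by (auto simp: cG' mG')
    show "\<one>\<^bsub>G'\<^esub> \<in> carrier G'" by (simp add: cG' oG')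
    show "x \<otimes>\<^bsub>G'\<^esub> y \<otimes>\<^bsub>G'\<^esub> z = x \<otimes>\<^bsub>G'\<^esub> (y \<otimes>\<^bsub>G'\<^esub> z)"
      if "x \<in> carrier G'" "y \<in> carrier G'" "z \<in> carrier G'" for x y z
      using that by (auto simp: cG' mG' G.m_assoc)
    show "x \<otimes>\<^bsub>G'\<^esub> y = y \<otimes>\<^bsub>G'\<^esub> x" if "x \<in> carrier G'" "y \<in> carrier G'" for x y
      using that by (auto simp: cG' mG' G.m_comm)
    show "\<one>\<^bsub>G'\<^esub> \<otimes>\<^bsub>G'\<^esub> x = x" if "x \<in> carrier G'" for x
      using that by (auto simp: cG' mG' oG')
    show "\<exists>y\<in>carrier G'. y \<otimes>\<^bsub>G'\<^esub> x = \<one>\<^bsub>G'\<^esub>" if "x \<in> carrier G'" for x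
    proof -
      have "x \<in> e ` carrier G" using that by (simp add: cG')
      then obtain a where a: "a \<in> carrier G" "x = e a" by (rule imageE) simp
      show ?thesis
        by (rule bexI[of _ "e (inv\<^bsub>G\<^esub> a)"]) (use a in \<open>auto simp: cG' mG' oG'\<close>)
    qed
  qed
  have iso: "e \<in> iso G G'"
    by (rule isoI) (auto simp: hom_def cG' mG' bij_betw_def e(2))
  have "card (auto G) = card (auto G')"
    by (rule card_auto_iso[OF G.is_group comm_group.axioms(2)[OF cg] iso])
  moreover have "card (carrier G') = card (carrier G)"
    using e(2) by (simp add: cG' card_image)
  ultimately have "aut_ratio G' = aut_ratio G" by (simp add: aut_ratio_def)
  moreover have "finite (carrier G')" using fin by (simp add: cG')
  ultimately show ?thesis using cg by blast
qed

lemma hom_coprime_trivial: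
  assumes H: "group H" and K: "group K" and cop: "coprime (order H) (order K)"
    and f: "f \<in> hom H K" and x: "x \<in> carrier H"
  shows "f x = \<one>\<^bsub>K\<^esub>"
proof -
  interpret H: group H by (rule H)
  interpret K: group K by (rule K)
  have fx: "f x \<in> carrier K" using f x by (auto simp: hom_def)
  have "f x [^]\<^bsub>K\<^esub> order H = f (x [^]\<^bsub>H\<^esub> order H)"
    using hom_nat_pow[OF f x H K] by simp
  also have "\<dots> = \<one>\<^bsub>K\<^esub>" using H.pow_order_eq_1[OF x] hom_one[OF f H K] by simp
  finally have "K.ord (f x) dvd order H" using K.pow_eq_id[OF fx] by simp
  moreover have "K.ord (f x) dvd order K" by (rule K.ord_dvd_group_order[OF fx])
  ultimately have "is_unit (K.ord (f x))" using cop by (metis coprime_common_divisor)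
  then have "K.ord (f x) = 1" by simp
  then show ?thesis using K.ord_eq_1[OF fx] by simp
qed

lemma card_auto_DirProd:
  fixes H :: "('a, 'x) monoid_scheme" and K :: "('b, 'y) monoid_scheme"
  assumes H: "group H" and K: "group K" and cop: "coprime (order H) (order K)"
  shows "card (auto (H \<times>\<times> K)) = card (auto H) * card (auto K)"
proof -
  interpret H: group H by (rule H)
  interpret K: group K by (rule K)
  have HK: "group (H \<times>\<times> K)" by (rule DirProd_group[OF H K])
  interpret HK: group "H \<times>\<times> K" by (rule HK)
  have cop': "coprime (order K) (order H)" using cop by (simp add: coprime_commute)
  define F where "F = (\<lambda>a::'a \<times> 'b \<Rightarrow> 'a \<times> 'b. (restrict (\<lambda>h. fst (a (h, \<one>\<^bsub>K\<^esub>))) (carrier H),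
                             restrict (\<lambda>k. snd (a (\<one>\<^bsub>H\<^esub>, k))) (carrier K)))"
  define F' where "F' = (\<lambda>(b::'a\<Rightarrow>'a,c::'b\<Rightarrow>'b). restrict (\<lambda>(h,k). (b h, c k)) (carrier H \<times> carrier K))"
  have inl: "(\<lambda>h. (h, \<one>\<^bsub>K\<^esub>)) \<in> hom H (H \<times>\<times> K)"
    by (auto simp: hom_def)
  have inr: "(\<lambda>k. (\<one>\<^bsub>H\<^esub>, k)) \<in> hom K (H \<times>\<times> K)"
    by (auto simp: hom_def)
  have fsth: "fst \<in> hom (H \<times>\<times> K) H" and sndh: "snd \<in> hom (H \<times>\<times> K) K"
    by (auto simp: hom_def)
  have key: "a (h, \<one>\<^bsub>K\<^esub>) = (fst (a (h, \<one>\<^bsub>K\<^esub>)), \<one>\<^bsub>K\<^esub>)"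
            "a (\<one>\<^bsub>H\<^esub>, k) = (\<one>\<^bsub>H\<^esub>, snd (a (\<one>\<^bsub>H\<^esub>, k)))"
            "a (h, k) = (fst (a (h, \<one>\<^bsub>K\<^esub>)), snd (a (\<one>\<^bsub>H\<^esub>, k)))"
    if a: "a \<in> hom (H \<times>\<times> K) (H \<times>\<times> K)" and h: "h \<in> carrier H" and k: "k \<in> carrier K" for a h k
  proof -
    have hs: "snd \<circ> a \<circ> (\<lambda>h. (h, \<one>\<^bsub>K\<^esub>)) \<in> hom H K"
      by (rule hom_compose[OF inl hom_compose[OF a sndh]])
    have 1: "snd (a (h, \<one>\<^bsub>K\<^esub>)) = \<one>\<^bsub>K\<^esub>"
      using hom_coprime_trivial[OF H K cop hs h] by simp
    have hf: "fst \<circ> a \<circ> (\<lambda>k. (\<one>\<^bsub>H\<^esub>, k)) \<in> hom K H"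
      by (rule hom_compose[OF inr hom_compose[OF a fsth]])
    have 2: "fst (a (\<one>\<^bsub>H\<^esub>, k)) = \<one>\<^bsub>H\<^esub>"
      using hom_coprime_trivial[OF K H cop' hf k] by simp
    define u where "u = fst (a (h, \<one>\<^bsub>K\<^esub>))"
    define v where "v = snd (a (\<one>\<^bsub>H\<^esub>, k))"
    have e1: "a (h, \<one>\<^bsub>K\<^esub>) = (u, \<one>\<^bsub>K\<^esub>)" by (simp add: prod_eq_iff u_def 1)
    have e2: "a (\<one>\<^bsub>H\<^esub>, k) = (\<one>\<^bsub>H\<^esub>, v)" by (simp add: prod_eq_iff v_def 2)
    show "a (h, \<one>\<^bsub>K\<^esub>) = (fst (a (h, \<one>\<^bsub>K\<^esub>)), \<one>\<^bsub>K\<^esub>)"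
      using e1 by simp
    show "a (\<one>\<^bsub>H\<^esub>, k) = (\<one>\<^bsub>H\<^esub>, snd (a (\<one>\<^bsub>H\<^esub>, k)))"
      using e2 by simp
    have c1: "u \<in> carrier H" and c2: "v \<in> carrier K"
      using a h k unfolding u_def v_def by (auto simp: hom_def Pi_def mem_Times_iff)
    have "a (h, k) = a ((h, \<one>\<^bsub>K\<^esub>) \<otimes>\<^bsub>H \<times>\<times> K\<^esub> (\<one>\<^bsub>H\<^esub>, k))" using h k by simp
    also have "\<dots> = a (h, \<one>\<^bsub>K\<^esub>) \<otimes>\<^bsub>H \<times>\<times> K\<^esub> a (\<one>\<^bsub>H\<^esub>, k)"
      by (rule hom_mult[OF a]) (simp_all add: h k)
    also have "\<dots> = (u, v)" unfolding e1 e2 using c1 c2 by simp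
    finally show "a (h, k) = (fst (a (h, \<one>\<^bsub>K\<^esub>)), snd (a (\<one>\<^bsub>H\<^esub>, k)))"
      by (simp add: u_def v_def)
  qed
  have F_in: "F a \<in> auto H \<times> auto K" if a: "a \<in> auto (H \<times>\<times> K)" for a
  proof -
    have ah: "a \<in> hom (H \<times>\<times> K) (H \<times>\<times> K)" and ab: "bij_betw a (carrier H \<times> carrier K) (carrier H \<times> carrier K)"
      using a by (auto simp: auto_def Bij_def)
    have "fst \<circ> a \<circ> (\<lambda>h. (h, \<one>\<^bsub>K\<^esub>)) \<in> hom H H"
      by (rule hom_compose[OF inl hom_compose[OF ah fsth]])
    then have h1: "fst (F a) \<in> hom H H" by (rule H.hom_restrict) (simp add: F_def)
    have "snd \<circ> a \<circ> (\<lambda>k. (\<one>\<^bsub>H\<^esub>, k)) \<in> hom K K"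
      by (rule hom_compose[OF inr hom_compose[OF ah sndh]])
    then have h2: "snd (F a) \<in> hom K K" by (rule K.hom_restrict) (simp add: F_def)
    have inj: "inj_on a (carrier H \<times> carrier K)" and sur: "a ` (carrier H \<times> carrier K) = carrier H \<times> carrier K"
      using ab by (auto simp: bij_betw_def)
    have b1: "bij_betw (fst (F a)) (carrier H) (carrier H)"
      unfolding bij_betw_def
    proof
      show "inj_on (fst (F a)) (carrier H)"
      proof (rule inj_onI)
        fix x y assume xy: "x \<in> carrier H" "y \<in> carrier H" "fst (F a) x = fst (F a) y"
        then have "a (x, \<one>\<^bsub>K\<^esub>) = a (y, \<one>\<^bsub>K\<^esub>)"
          using key(1)[OF ah, of x "\<one>\<^bsub>K\<^esub>"] key(1)[OF ah, of y "\<one>\<^bsub>K\<^esub>"] by (simp add: F_def)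
        then show "x = y" using inj xy by (auto dest: inj_onD)
      qed
      show "fst (F a) ` carrier H = carrier H"
      proof
        show "fst (F a) ` carrier H \<subseteq> carrier H"
          using ah by (auto simp: F_def hom_def Pi_def mem_Times_iff)
        show "carrier H \<subseteq> fst (F a) ` carrier H"
        proof
          fix z assume z: "z \<in> carrier H"
          then have "(z, \<one>\<^bsub>K\<^esub>) \<in> a ` (carrier H \<times> carrier K)" using sur by simp
          then obtain x y where xy: "x \<in> carrier H" "y \<in> carrier K" "(z, \<one>\<^bsub>K\<^esub>) = a (x, y)" by auto
          then have "z = fst (a (x, \<one>\<^bsub>K\<^esub>))" using key(3)[OF ah xy(1,2)] by simp
          then show "z \<in> fst (F a) ` carrier H" using xy(1) by (auto simp: F_def)
        qed
      qed
    qed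
    have b2: "bij_betw (snd (F a)) (carrier K) (carrier K)"
      unfolding bij_betw_def
    proof
      show "inj_on (snd (F a)) (carrier K)"
      proof (rule inj_onI)
        fix x y assume xy: "x \<in> carrier K" "y \<in> carrier K" "snd (F a) x = snd (F a) y"
        then have "a (\<one>\<^bsub>H\<^esub>, x) = a (\<one>\<^bsub>H\<^esub>, y)"
          using key(2)[OF ah, of "\<one>\<^bsub>H\<^esub>" x] key(2)[OF ah, of "\<one>\<^bsub>H\<^esub>" y] by (simp add: F_def)
        then show "x = y" using inj xy by (auto dest: inj_onD)
      qed
      show "snd (F a) ` carrier K = carrier K"
      proof
        show "snd (F a) ` carrier K \<subseteq> carrier K"
          using ah by (auto simp: F_def hom_def Pi_def mem_Times_iff)
        show "carrier K \<subseteq> snd (F a) ` carrier K"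
        proof
          fix z assume z: "z \<in> carrier K"
          then have "(\<one>\<^bsub>H\<^esub>, z) \<in> a ` (carrier H \<times> carrier K)" using sur by simp
          then obtain x y where xy: "x \<in> carrier H" "y \<in> carrier K" "(\<one>\<^bsub>H\<^esub>, z) = a (x, y)" by auto
          then have "z = snd (a (\<one>\<^bsub>H\<^esub>, y))" using key(3)[OF ah xy(1,2)] by simp
          then show "z \<in> snd (F a) ` carrier K" using xy(2) by (auto simp: F_def)
        qed
      qed
    qed
    show ?thesis using h1 h2 b1 b2
      by (cases "F a") (auto simp: auto_def Bij_def F_def)
  qed
  have F'_in: "F' bc \<in> auto (H \<times>\<times> K)" if bc: "bc \<in> auto H \<times> auto K" for bc
  proof -
    obtain b c where bc': "bc = (b, c)" by (cases bc)
    have "b \<in> iso H H" "c \<in> iso K K" using bc bc' by (auto simp: auto_def Bij_def iso_def)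
    then have iso: "(\<lambda>(x,y). (b x, c y)) \<in> iso (H \<times>\<times> K) (H \<times>\<times> K)"
      using iso_paired2[OF H K] by blast
    then have "F' bc \<in> iso (H \<times>\<times> K) (H \<times>\<times> K)"
      by (rule HK.iso_eq) (auto simp: F'_def bc')
    then show ?thesis
      by (auto simp: auto_def Bij_def iso_def F'_def bc')
  qed
  have "bij_betw F (auto (H \<times>\<times> K)) (auto H \<times> auto K)"
  proof (rule bij_betw_byWitness[where f'=F'])
    show "\<forall>a\<in>auto (H \<times>\<times> K). F' (F a) = a"
    proof
      fix a assume a: "a \<in> auto (H \<times>\<times> K)"
      then have ae: "a \<in> extensional (carrier H \<times> carrier K)" and ah: "a \<in> hom (H \<times>\<times> K) (H \<times>\<times> K)"
        by (auto simp: auto_def Bij_def)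
      show "F' (F a) = a"
      proof
        fix p show "F' (F a) p = a p"
        proof (cases "p \<in> carrier H \<times> carrier K")
          case True
          then obtain h k where p: "p = (h, k)" "h \<in> carrier H" "k \<in> carrier K" by auto
          then show ?thesis using key(3)[OF ah p(2,3)] by (simp add: F'_def F_def)
        next
          case False
          obtain h k where p: "p = (h, k)" by (cases p)
          then show ?thesis using ae False by (auto simp: F'_def F_def extensional_def)
        qed
      qed
    qed
    show "\<forall>bc\<in>auto H \<times> auto K. F (F' bc) = bc"
    proof
      fix bc assume bc: "bc \<in> auto H \<times> auto K"
      obtain b c where bc': "bc = (b, c)" by (cases bc)
      have be: "b \<in> extensional (carrier H)" and ce: "c \<in> extensional (carrier K)"
        and bh: "b \<in> hom H H" and ch: "c \<in> hom K K"
        using bc bc' by (auto simp: auto_def Bij_def)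
      have b1: "b \<one>\<^bsub>H\<^esub> = \<one>\<^bsub>H\<^esub>" and c1: "c \<one>\<^bsub>K\<^esub> = \<one>\<^bsub>K\<^esub>"
        using hom_one[OF bh H H] hom_one[OF ch K K] by auto
      have "restrict (\<lambda>h. fst (F' bc (h, \<one>\<^bsub>K\<^esub>))) (carrier H) = b"
      proof
        fix h show "restrict (\<lambda>h. fst (F' bc (h, \<one>\<^bsub>K\<^esub>))) (carrier H) h = b h"
          using be by (cases "h \<in> carrier H") (auto simp: F'_def bc' extensional_def)
      qed
      moreover have "restrict (\<lambda>k. snd (F' bc (\<one>\<^bsub>H\<^esub>, k))) (carrier K) = c"
      proof
        fix k show "restrict (\<lambda>k. snd (F' bc (\<one>\<^bsub>H\<^esub>, k))) (carrier K) k = c k"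
          using ce by (cases "k \<in> carrier K") (auto simp: F'_def bc' extensional_def)
      qed
      ultimately show "F (F' bc) = bc" by (simp add: F_def bc')
    qed
  qed (use F_in F'_in in blast)+
  then have "card (auto (H \<times>\<times> K)) = card (auto H \<times> auto K)" by (rule bij_betw_same_card)
  then show ?thesis by (simp add: card_cartesian_product)
qed

definition Zn :: "nat \<Rightarrow> nat monoid" where
  "Zn n = \<lparr>carrier = {..<n}, mult = (\<lambda>x y. (x + y) mod n), one = 0\<rparr>"

lemma Zn_simps [simp]: "carrier (Zn n) = {..<n}" "x \<otimes>\<^bsub>Zn n\<^esub> y = (x + y) mod n" "\<one>\<^bsub>Zn n\<^esub> = 0"
  by (simp_all add: Zn_def)

lemma Zn_comm_group: assumes "n > 0" shows "comm_group (Zn n)"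
proof (rule comm_groupI)
  show "\<exists>y\<in>carrier (Zn n). y \<otimes>\<^bsub>Zn n\<^esub> x = \<one>\<^bsub>Zn n\<^esub>" if "x \<in> carrier (Zn n)" for x
    using that assms by (intro bexI[of _ "(n - x) mod n"]) (auto simp: mod_add_left_eq)
qed (use assms in \<open>auto simp: mod_add_left_eq mod_add_right_eq ac_simps\<close>)

definition BG :: "nat \<Rightarrow> nat set monoid" where
  "BG k = \<lparr>carrier = Pow {..<k}, mult = (\<lambda>S T. (S - T) \<union> (T - S)), one = {}\<rparr>"

lemma BG_simps [simp]: "carrier (BG k) = Pow {..<k}" "S \<otimes>\<^bsub>BG k\<^esub> T = (S - T) \<union> (T - S)" "\<one>\<^bsub>BG k\<^esub> = {}"
  by (simp_all add: BG_def)

lemma BG_comm_group: "comm_group (BG k)"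
proof (rule comm_groupI)
  show "\<exists>y\<in>carrier (BG k). y \<otimes>\<^bsub>BG k\<^esub> x = \<one>\<^bsub>BG k\<^esub>" if "x \<in> carrier (BG k)" for x
    using that by (intro bexI[of _ x]) auto
qed auto

lemma card_BG: "card (carrier (BG k)) = 2 ^ k"
  by (simp add: card_Pow)

lemma card_auto_BG: "fact k \<le> card (auto (BG k))"
proof -
  define A where "A = {..<k}"
  define P where "P = (\<lambda>p::nat \<Rightarrow> nat. restrict (\<lambda>S. p ` S) (Pow A))"
  have fin: "finite (auto (BG k))"
  proof (rule finite_subset)
    show "auto (BG k) \<subseteq> PiE (Pow A) (\<lambda>_. Pow A)"
      by (auto simp: auto_def Bij_def hom_def PiE_def A_def)
    show "finite (PiE (Pow A) (\<lambda>_. Pow A))" by (simp add: A_def finite_PiE)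
  qed
  have "P ` {p. p permutes A} \<subseteq> auto (BG k)"
  proof
    fix F assume "F \<in> P ` {p. p permutes A}"
    then obtain p where p: "p permutes A" and F: "F = P p" by auto
    have bp: "bij_betw p A A" using p by (rule permutes_imp_bij)
    have ip: "inj p" using p by (rule permutes_inj)
    have "bij_betw (image p) (Pow A) (Pow A)" using bp by (rule bij_betw_image_Pow)
    then have "bij_betw F (Pow A) (Pow A)"
      by (rule bij_betw_cong[THEN iffD1, rotated]) (simp add: F P_def)
    moreover have "F \<in> hom (BG k) (BG k)"
      using bp ip unfolding hom_def
      by (auto simp: F P_def A_def bij_betw_def image_Un image_set_diff)
    ultimately show "F \<in> auto (BG k)"
      by (simp add: auto_def Bij_def F P_def A_def)
  qed
  moreover have "inj_on P {p. p permutes A}"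
  proof (rule inj_onI)
    fix p q assume p: "p \<in> {p. p permutes A}" and q: "q \<in> {p. p permutes A}" and eq: "P p = P q"
    show "p = q"
    proof
      fix i show "p i = q i"
      proof (cases "i \<in> A")
        case True
        then have "P p {i} = P q {i}" using eq by simp
        then show ?thesis using True by (simp add: P_def)
      next
        case False
        then show ?thesis using p q by (simp add: permutes_not_in)
      qed
    qed
  qed
  ultimately have "card {p. p permutes A} \<le> card (auto (BG k))"
    using fin by (intro card_inj_on_le)
  moreover have "card {p. p permutes A} = fact k"
    by (rule card_permutations) (simp_all add: A_def)
  ultimately show ?thesis by simp
qed

lemma coprime_of_mod_1:
  fixes a n x :: nat assumes "(x * a) mod n = 1" shows "coprime a n"
proof (rule coprimeI)
  fix d assume d: "d dvd a" "d dvd n"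
  have "x * a = (x * a) div n * n + 1" using div_mult_mod_eq[of "x * a" n] assms by simp
  moreover have "d dvd x * a" using d by simp
  moreover have "d dvd (x * a) div n * n" using d by simp
  ultimately show "is_unit d" by (metis dvd_add_right_iff)
qed

lemma card_auto_Zn:
  assumes n: "n \<ge> 2"
  shows "card (auto (Zn n)) = totient n"
proof -
  interpret Z: comm_group "Zn n" using Zn_comm_group n by simp
  define U where "U = {a. a < n \<and> coprime a n}"
  have "totatives n = U"
  proof -
    have "\<not> coprime n n" using n by simp
    moreover have "\<not> coprime 0 n" using n by simp
    ultimately show ?thesis
      by (auto simp: totatives_def U_def order.order_iff_strict intro: gr0I)
  qed
  then have cU: "card U = totient n" by (simp add: totient_def)
  define M where "M = (\<lambda>a. restrict (\<lambda>x. (x * a) mod n) {..<n})"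
  have M_in: "M a \<in> auto (Zn n)" if a: "a \<in> U" for a
  proof -
    have hom: "M a \<in> hom (Zn n) (Zn n)"
      using n by (auto simp: hom_def M_def mod_mult_left_eq mod_add_eq distrib_right)
    have inj: "inj_on (M a) {..<n}"
    proof (rule inj_onI)
      fix x y assume xy: "x \<in> {..<n}" "y \<in> {..<n}" "M a x = M a y"
      then have "[x * a = y * a] (mod n)" by (simp add: M_def cong_def)
      then have "[x = y] (mod n)" using a by (simp add: U_def cong_mult_rcancel_nat)
      then show "x = y" using xy by (simp add: cong_def)
    qed
    have "M a ` {..<n} \<subseteq> {..<n}" using n by (auto simp: M_def)
    then have "M a ` {..<n} = {..<n}" using inj by (intro endo_inj_surj) auto
    then have "bij_betw (M a) {..<n} {..<n}" using inj by (simp add: bij_betw_def)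
    then show ?thesis using hom by (simp add: auto_def Bij_def M_def)
  qed
  have injM: "inj_on M U"
  proof (rule inj_onI)
    fix a b assume ab: "a \<in> U" "b \<in> U" "M a = M b"
    then have "M a 1 = M b 1" by simp
    then show "a = b" using ab n by (simp add: M_def U_def)
  qed
  have surjM: "auto (Zn n) \<subseteq> M ` U"
  proof
    fix f assume f: "f \<in> auto (Zn n)"
    have fh: "f \<in> hom (Zn n) (Zn n)" and fb: "bij_betw f {..<n} {..<n}" and fe: "f \<in> extensional {..<n}"
      using f by (auto simp: auto_def Bij_def)
    define a where "a = f 1"
    have an: "a < n" using fb n by (auto simp: a_def bij_betw_def)
    have f0: "f 0 = 0" using hom_one[OF fh Z.is_group Z.is_group] by simp
    have fx: "f x = (x * a) mod n" if "x < n" for x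
      using that
    proof (induction x)
      case 0 then show ?case using f0 by simp
    next
      case (Suc x)
      have "f (x \<otimes>\<^bsub>Zn n\<^esub> 1) = f x \<otimes>\<^bsub>Zn n\<^esub> f 1"
        by (rule hom_mult[OF fh]) (use Suc.prems n in auto)
      then have "f (Suc x) = f x \<otimes>\<^bsub>Zn n\<^esub> f 1"
        using Suc.prems by simp
      also have "\<dots> = ((x * a) mod n + a) mod n" using Suc by (simp add: a_def)
      also have "\<dots> = (Suc x * a) mod n" by (simp add: mod_add_left_eq mod_add_right_eq add.commute)
      finally show ?case .
    qed
    have "1 \<in> f ` {..<n}" using fb n by (simp add: bij_betw_def)
    then obtain x where x: "x < n" "f x = 1" by auto
    then have "coprime a n" using fx[OF x(1)] by (intro coprime_of_mod_1[of x]) simp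
    then have "a \<in> U" using an by (simp add: U_def)
    moreover have "f = M a"
    proof
      fix y show "f y = M a y"
        using fe fx by (cases "y < n") (auto simp: M_def extensional_def)
    qed
    ultimately show "f \<in> M ` U" by blast
  qed
  have "bij_betw M U (auto (Zn n))"
    using injM surjM M_in by (auto simp: bij_betw_def)
  then show ?thesis using cU by (simp add: bij_betw_same_card)
qed

lemma geom_le:
  fixes p :: nat assumes p: "p \<ge> 2"
  shows "(\<Sum>e\<in>{..N}. (1 / real p) ^ e) \<le> 1 / (1 - 1 / real p)"
proof -
  have x: "1 / real p < 1" "0 \<le> 1 / real p" using p by auto
  have "(\<Sum>e\<in>{..N}. (1 / real p) ^ e) = (\<Sum>e<Suc N. (1 / real p) ^ e)"
    by (simp add: lessThan_Suc_atMost)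
  also have "\<dots> = (1 - (1 / real p) ^ Suc N) / (1 - 1 / real p)"
    using x p by (subst sum_gp_strict) simp
  also have "\<dots> \<le> 1 / (1 - 1 / real p)"
    using x by (intro divide_right_mono) auto
  finally show ?thesis .
qed

lemma prod_mult_eq:
  fixes n N :: nat
  assumes n: "n \<in> {1..N}"
  shows "(\<Prod>p\<in>{p. prime p \<and> p \<le> N}. p ^ multiplicity p n) = n"
proof -
  have "n > 0" using n by simp
  have sub: "prime_factors n \<subseteq> {p. prime p \<and> p \<le> N}"
  proof
    fix p assume "p \<in> prime_factors n"
    then have "prime p" "p dvd n" by (auto simp: in_prime_factors_iff)
    then show "p \<in> {p. prime p \<and> p \<le> N}" using n \<open>n > 0\<close> dvd_imp_le[of p n] by auto
  qed
  have "(\<Prod>p\<in>{p. prime p \<and> p \<le> N}. p ^ multiplicity p n) = (\<Prod>p\<in>prime_factors n. p ^ multiplicity p n)"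
  proof (rule prod.mono_neutral_right)
    show "finite {p. prime p \<and> p \<le> N}" by simp
    show "prime_factors n \<subseteq> {p. prime p \<and> p \<le> N}" by (rule sub)
    show "\<forall>i\<in>{p. prime p \<and> p \<le> N} - prime_factors n. i ^ multiplicity i n = 1"
      using \<open>n > 0\<close> by (auto simp: in_prime_factors_iff not_dvd_imp_multiplicity_0)
  qed
  also have "\<dots> = n" using prime_factorization_nat[OF \<open>n > 0\<close>] by simp
  finally show ?thesis .
qed

lemma euler_bound:
  fixes N :: nat
  shows "harm N \<le> (\<Prod>p\<in>{p. prime p \<and> p \<le> N}. 1 / (1 - 1 / real p))"
proof -
  define A where "A = {p. prime p \<and> p \<le> N}"
  have finA: "finite A" by (simp add: A_def)
  have p2: "p \<ge> 2" if "p \<in> A" for p using that by (auto simp: A_def prime_ge_2_nat)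
  define F where "F = (\<lambda>n::nat. restrict (\<lambda>p. multiplicity p n) A)"
  have Fn: "(\<Prod>p\<in>A. (1 / real p) ^ F n p) = 1 / real n" if n: "n \<in> {1..N}" for n
  proof -
    have "(\<Prod>p\<in>A. (1 / real p) ^ F n p) = (\<Prod>p\<in>A. 1 / real (p ^ multiplicity p n))"
      by (rule prod.cong) (auto simp: F_def power_one_over)
    also have "\<dots> = 1 / real (\<Prod>p\<in>A. p ^ multiplicity p n)"
      by (simp add: prod_dividef)
    also have "\<dots> = 1 / real n" using prod_mult_eq[OF n] by (simp add: A_def)
    finally show ?thesis .
  qed
  have injF: "inj_on F {1..N}"
  proof (rule inj_onI)
    fix m n assume mn: "m \<in> {1..N}" "n \<in> {1..N}" "F m = F n"
    have "m = (\<Prod>p\<in>A. p ^ multiplicity p m)" using prod_mult_eq[OF mn(1)] by (simp add: A_def)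
    also have "\<dots> = (\<Prod>p\<in>A. p ^ F m p)" by (rule prod.cong) (auto simp: F_def)
    also have "\<dots> = (\<Prod>p\<in>A. p ^ F n p)" using mn(3) by simp
    also have "\<dots> = (\<Prod>p\<in>A. p ^ multiplicity p n)" by (rule prod.cong) (auto simp: F_def)
    also have "\<dots> = n" using prod_mult_eq[OF mn(2)] by (simp add: A_def)
    finally show "m = n" .
  qed
  have Fsub: "F ` {1..N} \<subseteq> PiE A (\<lambda>_. {..N})"
  proof
    fix g assume "g \<in> F ` {1..N}"
    then obtain n where n: "n \<in> {1..N}" "g = F n" by auto
    have "multiplicity p n \<le> N" if "p \<in> A" for p
    proof -
      have "p ^ multiplicity p n dvd n" by (rule multiplicity_dvd)
      then have a: "p ^ multiplicity p n \<le> n" using n by (intro dvd_imp_le) auto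
      have b: "multiplicity p n < 2 ^ multiplicity p n" by (rule less_exp)
      have c: "2 ^ multiplicity p n \<le> p ^ multiplicity p n"
        using p2[OF that] by (intro power_mono) auto
      have d: "n \<le> N" using n by simp
      from a b c d show ?thesis by linarith
    qed
    then show "g \<in> PiE A (\<lambda>_. {..N})" using n by (auto simp: F_def)
  qed
  have "harm N = (\<Sum>n\<in>{1..N}. 1 / real n)" by (simp add: harm_def divide_inverse)
  also have "\<dots> = (\<Sum>n\<in>{1..N}. \<Prod>p\<in>A. (1 / real p) ^ F n p)"
    by (rule sum.cong) (simp_all add: Fn)
  also have "\<dots> = (\<Sum>g\<in>F ` {1..N}. \<Prod>p\<in>A. (1 / real p) ^ g p)"
    using sum.reindex[OF injF, of "\<lambda>g. \<Prod>p\<in>A. (1 / real p) ^ g p"] by (simp add: o_def)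
  also have "\<dots> \<le> (\<Sum>g\<in>PiE A (\<lambda>_. {..N}). \<Prod>p\<in>A. (1 / real p) ^ g p)"
    by (rule sum_mono2[OF _ Fsub]) (auto simp: finA finite_PiE intro: prod_nonneg)
  also have "\<dots> = (\<Prod>p\<in>A. \<Sum>e\<in>{..N}. (1 / real p) ^ e)"
    by (rule prod_sum_PiE[symmetric]) (simp_all add: finA)
  also have "\<dots> \<le> (\<Prod>p\<in>A. 1 / (1 - 1 / real p))"
    by (rule prod_mono) (auto intro: sum_nonneg geom_le p2)
  finally show ?thesis by (simp add: A_def)
qed

lemma totient_prod_primes:
  assumes "finite S" "\<forall>p\<in>S. prime p"
  shows "real (totient (\<Prod>S)) / real (\<Prod>S) = (\<Prod>p\<in>S. 1 - 1 / real p)"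
  using assms
proof (induction S rule: finite_induct)
  case empty then show ?case by simp
next
  case (insert p S)
  have pp: "prime p" using insert by simp
  have p2: "p \<ge> 2" using pp by (rule prime_ge_2_nat)
  have "\<not> p dvd \<Prod>S"
  proof
    assume "p dvd \<Prod>S"
    then obtain q where q: "q \<in> S" "p dvd q" using prime_dvd_prod_iff[OF insert(1) pp, of id] by auto
    then have "p = q" using insert pp by (simp add: primes_dvd_imp_eq)
    then show False using q insert by simp
  qed
  then have cop: "coprime p (\<Prod>S)" using pp by (rule prime_imp_coprime[rotated])
  have pos: "\<Prod>S > 0" using insert by (auto intro!: prod_pos prime_gt_0_nat)
  have "totient (\<Prod>(insert p S)) = (p - 1) * totient (\<Prod>S)"
    using insert cop by (simp add: totient_mult_coprime totient_prime pp)
  then have "real (totient (\<Prod>(insert p S))) / real (\<Prod>(insert p S))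
      = (real p - 1) * real (totient (\<Prod>S)) / (real p * real (\<Prod>S))"
    using insert p2 by (simp add: of_nat_diff)
  also have "\<dots> = (1 - 1 / real p) * (real (totient (\<Prod>S)) / real (\<Prod>S))"
    using p2 pos by (simp add: field_simps)
  also have "\<dots> = (\<Prod>q\<in>insert p S. 1 - 1 / real q)" using insert by simp
  finally show ?case .
qed

definition Q :: "nat \<Rightarrow> real" where "Q N = (\<Prod>p\<in>{p. prime p \<and> p \<le> N}. 1 - 1 / real p)"

lemma Q_pos: "Q N > 0"
  unfolding Q_def by (rule prod_pos) (auto dest: prime_ge_2_nat simp: field_simps)

lemma Q_le: assumes "N \<ge> 1" shows "Q N \<le> 1 / harm N"
proof -
  have "(\<Prod>p\<in>{p. prime p \<and> p \<le> N}. 1 / (1 - 1 / real p)) = 1 / Q N"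
    by (simp add: Q_def prod_dividef)
  then have "harm N \<le> 1 / Q N" using euler_bound[of N] by simp
  moreover have "harm N > (0::real)" using assms by simp
  ultimately show ?thesis using Q_pos[of N] by (simp add: field_simps)
qed

lemma Q_small: assumes "\<delta> > 0" shows "\<exists>N0. \<forall>N\<ge>N0. Q N \<le> \<delta>"
proof -
  have "eventually (\<lambda>N. 1 / \<delta> \<le> (harm N :: real)) sequentially"
    using harm_at_top unfolding filterlim_at_top by blast
  then obtain N0 where N0: "\<forall>N\<ge>N0. 1 / \<delta> \<le> (harm N :: real)"
    by (auto simp: eventually_sequentially)
  show ?thesis
  proof (intro exI allI impI)
    fix N assume N: "N \<ge> max N0 1"
    then have h: "1 / \<delta> \<le> harm N" using N0 by simp
    have hp: "harm N > (0::real)" using N by simp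
    have "Q N \<le> 1 / harm N" using N by (intro Q_le) simp
    also have "\<dots> \<le> \<delta>" using h hp assms by (simp add: field_simps)
    finally show "Q N \<le> \<delta>" .
  qed
qed

lemma fine_tune:
  fixes t \<epsilon> :: real
  assumes t: "0 < t" "t < 1" and e: "0 < \<epsilon>"
  shows "\<exists>n. odd n \<and> n \<ge> 2 \<and> \<bar>real (totient n) / real n - t\<bar> < \<epsilon>"
proof -
  define M :: nat where "M = nat \<lceil>1 / \<epsilon>\<rceil> + 2"
  have M2: "M \<ge> 2" by (simp add: M_def)
  have "1 / \<epsilon> < real M" unfolding M_def by linarith
  then have Me: "1 / real M < \<epsilon>" using e M2 by (simp add: field_simps)
  define B where "B = (\<lambda>N. {p. prime p \<and> M < p \<and> p \<le> N})"
  define g where "g = (\<lambda>N. \<Prod>p\<in>B N. 1 - 1 / real p)"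
  have finB: "finite (B N)" for N by (simp add: B_def)
  have g_le1: "g N \<le> 1" for N
    unfolding g_def by (rule prod_le_1) (auto simp: B_def dest: prime_gt_0_nat)
  have g_empty: "g N = 1" if "N \<le> M" for N
  proof -
    have "B N = {}" using that by (auto simp: B_def)
    then show ?thesis by (simp add: g_def)
  qed
  have QM: "Q N = Q M * g N" if "N \<ge> M" for N
  proof -
    have "{p. prime p \<and> p \<le> N} = {p. prime p \<and> p \<le> M} \<union> B N"
      using that by (auto simp: B_def)
    moreover have "{p. prime p \<and> p \<le> M} \<inter> B N = {}" by (auto simp: B_def)
    ultimately show ?thesis
      unfolding Q_def g_def by (simp add: prod.union_disjoint finB)
  qed
  obtain N' where N': "\<forall>N\<ge>N'. Q N \<le> t * Q M"
    using Q_small[of "t * Q M"] t Q_pos[of M] by auto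
  have ex: "g (max N' M) \<le> t"
  proof -
    have "Q M * g (max N' M) \<le> t * Q M" using N'[rule_format, of "max N' M"] QM[of "max N' M"] by simp
    then show ?thesis using Q_pos[of M] by (simp add: mult.commute)
  qed
  define N0 where "N0 = (LEAST N. g N \<le> t)"
  have gN0: "g N0 \<le> t" unfolding N0_def by (rule LeastI[of "\<lambda>N. g N \<le> t", OF ex])
  have N0M: "N0 > M"
  proof (rule ccontr)
    assume "\<not> N0 > M"
    then have "g N0 = 1" by (intro g_empty) simp
    then show False using gN0 t by simp
  qed
  then obtain N1 where N1: "N0 = Suc N1" by (cases N0) auto
  have gN1: "\<not> g N1 \<le> t"
    unfolding N0_def[symmetric] using not_less_Least[of N1 "\<lambda>N. g N \<le> t"] N1 N0_def by simp
  have pN0: "prime N0"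
  proof (rule ccontr)
    assume np: "\<not> prime N0"
    have "B N0 = B N1" using np N1 by (auto simp: B_def le_Suc_eq)
    then show False using gN0 gN1 by (simp add: g_def)
  qed
  have BN0: "B N0 = insert N0 (B N1)" and nin: "N0 \<notin> B N1"
    using pN0 N0M N1 by (auto simp: B_def le_Suc_eq)
  have gstep: "g N0 = (1 - 1 / real N0) * g N1"
    using nin finB by (simp add: g_def BN0)
  have "g N0 = g N1 - g N1 / real N0" using gstep by (simp add: algebra_simps)
  moreover have "g N1 / real N0 \<le> 1 / real N0"
    using g_le1[of N1] N0M by (simp add: divide_right_mono)
  moreover have "1 / real N0 < 1 / real M" using N0M M2 by (simp add: frac_less2)
  ultimately have low: "g N0 > t - \<epsilon>" using gN1 Me by linarith
  define n where "n = \<Prod>(B N0)"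
  have primesB: "\<forall>p\<in>B N0. prime p" by (simp add: B_def)
  have ratio: "real (totient n) / real n = g N0"
    unfolding n_def g_def by (rule totient_prod_primes[OF finB primesB])
  have odd: "odd n"
  proof
    assume "even n"
    then have "2 dvd \<Prod>(B N0)" by (simp add: n_def)
    then obtain q where q: "q \<in> B N0" "2 dvd q"
      using prime_dvd_prod_iff[OF finB two_is_prime_nat, of id] by auto
    then have "q = 2" using primes_dvd_imp_eq[OF two_is_prime_nat, of q] by (simp add: B_def)
    then show False using q M2 by (simp add: B_def)
  qed
  have "N0 dvd n" unfolding n_def using finB BN0 by (intro dvd_prodI) auto
  moreover have "n > 0" unfolding n_def by (rule prod_pos) (use primesB in \<open>auto intro: prime_gt_0_nat\<close>)
  ultimately have "n \<ge> N0" by (intro dvd_imp_le)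
  then have "n \<ge> 2" using N0M M2 by simp
  moreover have "\<bar>real (totient n) / real n - t\<bar> < \<epsilon>" using ratio gN0 low e by simp
  ultimately show ?thesis using odd by blast
qed

lemma fact_growth: "(2::real) ^ (m + 4) * (real m + 1) \<le> fact (m + 4)"
proof (induction m)
  case 0 then show ?case by (simp add: fact_numeral)
next
  case (Suc m)
  have "(2::real) ^ (Suc m + 4) * (real (Suc m) + 1) = 2 * (2 ^ (m + 4)) * (real m + 2)" by (simp add: power_add algebra_simps)
  also have "\<dots> \<le> (real m + 5) * (2 ^ (m + 4) * (real m + 1))"
  proof -
    have "2 * (real m + 2) \<le> (real m + 5) * (real m + 1)" by (simp add: algebra_simps)
    then have "2 ^ (m + 4) * (2 * (real m + 2)) \<le> 2 ^ (m + 4) * ((real m + 5) * (real m + 1))"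
      by (intro mult_left_mono) auto
    then show ?thesis by (simp add: algebra_simps)
  qed
  also have "\<dots> \<le> (real m + 5) * fact (m + 4)"
    using Suc.IH by (intro mult_left_mono) auto
  also have "\<dots> = fact (Suc m + 4)" by (simp only: add_Suc fact_Suc) (simp add: algebra_simps)
  finally show ?case .
qed

lemma DirProd_comm_group:
  assumes "comm_group G" "comm_group H" shows "comm_group (G \<times>\<times> H)"
proof -
  interpret G: comm_group G by fact
  interpret H: comm_group H by fact
  interpret GH: group "G \<times>\<times> H" by (rule DirProd_group) (simp_all add: G.is_group H.is_group)
  show ?thesis
    by (rule GH.group_comm_groupI) (auto simp: G.m_comm H.m_comm)
qed

theorem theorem1p1:
  shows "{0::real..} \<subseteq>
    closure {aut_ratio G | G :: nat monoid. comm_group G \<and> finite (carrier G)}"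
proof
  fix x :: real assume "x \<in> {0..}"
  then have x0: "x \<ge> 0" by simp
  show "x \<in> closure {aut_ratio G | G :: nat monoid. comm_group G \<and> finite (carrier G)}"
    unfolding closure_approachable
  proof (intro allI impI)
    fix e :: real assume e: "e > 0"
    define m where "m = nat \<lceil>x\<rceil>"
    define k where "k = m + 4"
    define L where "L = aut_ratio (BG k)"
    have "(2::real) ^ k * (x + 1) \<le> 2 ^ k * (real m + 1)"
      unfolding m_def by (intro mult_left_mono) (linarith, simp)
    also have "\<dots> \<le> fact k" unfolding k_def by (rule fact_growth)
    also have "\<dots> \<le> real (card (auto (BG k)))"
      using card_auto_BG[of k] by (metis of_nat_fact of_nat_le_iff)
    finally have "(2::real) ^ k * (x + 1) \<le> real (card (auto (BG k)))" .
    then have L1: "x + 1 \<le> L"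
      unfolding L_def aut_ratio_def by (simp add: card_Pow field_simps)
    have Lpos: "L > 0" using L1 x0 by simp
    define t where "t = (if x = 0 then min (e / (2 * L)) (1 / 2) else x / L)"
    have t: "0 < t" "t < 1" using x0 L1 Lpos e by (auto simp: t_def field_simps)
    have tx: "\<bar>t - x / L\<bar> \<le> e / (2 * L)" using e Lpos by (auto simp: t_def)
    obtain n where n: "odd n" "n \<ge> 2" "\<bar>real (totient n) / real n - t\<bar> < e / (2 * L)"
      using fine_tune[OF t, of "e / (2 * L)"] e Lpos by auto
    have close: "\<bar>real (totient n) / real n - x / L\<bar> < e / L"
      using n(3) tx by (simp add: abs_diff_le_iff abs_diff_less_iff field_simps) linarith?
    define G where "G = BG k \<times>\<times> Zn n"
    have cgZ: "comm_group (Zn n)" using n by (intro Zn_comm_group) simp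
    have cg: "comm_group G" unfolding G_def
      by (rule DirProd_comm_group[OF BG_comm_group cgZ])
    have fin: "finite (carrier G)" by (simp add: G_def)
    have "coprime 2 n" using n(1) by (intro prime_imp_coprime two_is_prime_nat) simp
    then have cop: "coprime (order (BG k)) (order (Zn n))"
      by (simp add: order_def card_Pow)
    have "card (auto G) = card (auto (BG k)) * totient n"
      unfolding G_def using card_auto_DirProd[OF comm_group.axioms(2)[OF BG_comm_group]
          comm_group.axioms(2)[OF cgZ] cop] card_auto_Zn[OF n(2)] by simp
    moreover have "card (carrier G) = 2 ^ k * n"
      by (simp add: G_def card_cartesian_product card_Pow)
    ultimately have "aut_ratio G = L * (real (totient n) / real n)"
      unfolding aut_ratio_def L_def by (simp add: card_Pow)
    then have "\<bar>aut_ratio G - x\<bar> = L * \<bar>real (totient n) / real n - x / L\<bar>"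
      using Lpos by (simp add: field_simps abs_mult[symmetric])
    also have "\<dots> < L * (e / L)" using close Lpos by (intro mult_strict_left_mono)
    also have "\<dots> = e" using Lpos by simp
    finally have lt: "\<bar>aut_ratio G - x\<bar> < e" .
    obtain G' :: "nat monoid" where G': "comm_group G'" "finite (carrier G')" "aut_ratio G' = aut_ratio G"
      using transfer_nat[OF cg fin] by blast
    show "\<exists>y\<in>{aut_ratio G | G :: nat monoid. comm_group G \<and> finite (carrier G)}. dist y x < e"
    proof (rule bexI[of _ "aut_ratio G'"])
      show "dist (aut_ratio G') x < e" using G'(3) lt by (simp add: dist_real_def)
      show "aut_ratio G' \<in> {aut_ratio G | G :: nat monoid. comm_group G \<and> finite (carrier G)}"
        using G'(1,2) by blast
    qed
  qed
qed

end
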